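(* Let $f=f(n)\ge0$ with $f\to\infty$. There exists a constant $C>0$ such that, for all sufficiently large $n$ and every $f/n\le p\le1$, with probability at least $1-e^{-C(pn)^{1/3}}$ the number of vertices of $\mathcal G(n,p)$ whose degree lies outside $[\bar d-(pn)^{2/3},\bar d+(pn)^{2/3}]$ is at most $n/e^{Cf^{1/3}}$.
   Context: $\mathcal G(n,p)$ is the Erdős–Rényi random graph on $[n]$, each edge present independently with probability $p$. $\bar d=2m/(n-1)$, where $m$ is the number of edges of $\mathcal G(n,p)$. The constant $C$ does not depend on $p$. *)

theory Defs
  imports "HOL-Analysis.Analysis"
begin

text \<open>Vertex set [n] is {0..<n}; a graph on [n] is a set of pairs (i,j) with i<j<n.\<close>
definition gpairs :: "nat \<Rightarrow> (nat \<times> nat) set" where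
  "gpairs n = {(i,j). i < j \<and> j < n}"

definition gnp_prob :: "nat \<Rightarrow> real \<Rightarrow> ((nat \<times> nat) set \<Rightarrow> bool) \<Rightarrow> real" where
  "gnp_prob n p P = (\<Sum>S\<in>Pow (gpairs n).
      if P S then p ^ card S * (1 - p) ^ (card (gpairs n) - card S) else 0)"

definition gdeg :: "(nat \<times> nat) set \<Rightarrow> nat \<Rightarrow> nat" where
  "gdeg S v = card {e\<in>S. fst e = v \<or> snd e = v}"

definition avg_deg :: "nat \<Rightarrow> (nat \<times> nat) set \<Rightarrow> real" where
  "avg_deg n S = 2 * real (card S) / (real n - 1)"

definition num_atypical :: "nat \<Rightarrow> real \<Rightarrow> (nat \<times> nat) set \<Rightarrow> nat" where
  "num_atypical n x S = card {v. v < n \<and>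
      (real (gdeg S v) < avg_deg n S - x \<or> real (gdeg S v) > avg_deg n S + x)}"

end

theory Submission
  imports Defs
begin

definition wt :: "'a set \<Rightarrow> real \<Rightarrow> 'a set \<Rightarrow> real" where
  "wt A p S = p ^ card S * (1 - p) ^ (card A - card S)"
definition pr :: "'a set \<Rightarrow> real \<Rightarrow> ('a set \<Rightarrow> bool) \<Rightarrow> real" where
  "pr A p P = (\<Sum>S\<in>Pow A. if P S then wt A p S else 0)"

lemma wt_nonneg: "0 \<le> p \<Longrightarrow> p \<le> 1 \<Longrightarrow> 0 \<le> wt A p S"
  unfolding wt_def by simp

lemma mgf:
  assumes A: "finite A" and B: "B \<subseteq> A"
  shows "(\<Sum>S\<in>Pow A. wt A p S * c ^ card (S \<inter> B)) = (p * c + (1 - p)) ^ card B"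
proof -
  define a where "a e = (if e \<in> B then c else 1)" for e
  have 1: "(\<Prod>e\<in>A. p * a e + (1 - p)) = (\<Sum>X\<in>Pow A. (\<Prod>e\<in>X. p * a e) * (\<Prod>e\<in>A-X. 1 - p))"
    by (rule prod_add[OF A])
  have 2: "(\<Prod>e\<in>X. p * a e) * (\<Prod>e\<in>A-X. 1 - p) = wt A p X * c ^ card (X \<inter> B)" if "X \<in> Pow A" for X
  proof -
    have fX: "finite X" using that A finite_subset by auto
    have "(\<Prod>e\<in>X. a e) = (\<Prod>e\<in>X \<inter> B. c)"
      unfolding a_def using fX by (simp add: prod.inter_filter[symmetric] Int_def)
    also have "\<dots> = c ^ card (X \<inter> B)" by simp
    finally have pa: "(\<Prod>e\<in>X. a e) = c ^ card (X \<inter> B)" .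
    have "card (A - X) = card A - card X" using that A by (simp add: card_Diff_subset finite_subset)
    then show ?thesis unfolding wt_def using pa by (simp add: prod.distrib)
  qed
  have 3: "(\<Prod>e\<in>A. p * a e + (1 - p)) = (\<Prod>e\<in>B. p * c + (1 - p))"
  proof -
    have "(\<Prod>e\<in>A. p * a e + (1 - p)) = (\<Prod>e\<in>A. if e \<in> B then p * c + (1 - p) else 1)"
      unfolding a_def by (rule prod.cong) auto
    also have "\<dots> = (\<Prod>e\<in>A \<inter> B. p * c + (1 - p))"
      using A by (simp add: prod.inter_filter[symmetric] Int_def)
    also have "A \<inter> B = B" using B by auto
    finally show ?thesis .
  qed
  show ?thesis using 1 2 3 by simp
qed

lemma wt_total: "finite A \<Longrightarrow> (\<Sum>S\<in>Pow A. wt A p S) = 1"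
  using mgf[of A "{}" p 1] by simp

lemma pr_nonneg: "0 \<le> p \<Longrightarrow> p \<le> 1 \<Longrightarrow> 0 \<le> pr A p P"
  unfolding pr_def by (rule sum_nonneg) (simp add: wt_nonneg)

lemma pr_mono: "0 \<le> p \<Longrightarrow> p \<le> 1 \<Longrightarrow> (\<And>S. S \<subseteq> A \<Longrightarrow> P S \<Longrightarrow> Q S) \<Longrightarrow> pr A p P \<le> pr A p Q"
  unfolding pr_def by (rule sum_mono) (auto simp: wt_nonneg)

lemma pr_union: "0 \<le> p \<Longrightarrow> p \<le> 1 \<Longrightarrow> pr A p (\<lambda>S. P S \<or> Q S) \<le> pr A p P + pr A p Q"
  unfolding pr_def sum.distrib[symmetric] by (rule sum_mono) (auto simp: wt_nonneg)

lemma pr_compl: "finite A \<Longrightarrow> pr A p (\<lambda>S. \<not> P S) = 1 - pr A p P"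
proof -
  assume A: "finite A"
  have "pr A p (\<lambda>S. \<not> P S) + pr A p P = (\<Sum>S\<in>Pow A. wt A p S)"
    unfolding pr_def sum.distrib[symmetric] by (rule sum.cong) auto
  then show ?thesis using wt_total[OF A, of p] by simp
qed

lemma pr_markov:
  assumes "0 \<le> p" "p \<le> 1" "\<And>S. S \<subseteq> A \<Longrightarrow> 0 \<le> F S" "\<And>S. S \<subseteq> A \<Longrightarrow> P S \<Longrightarrow> 1 \<le> F S"
  shows "pr A p P \<le> (\<Sum>S\<in>Pow A. wt A p S * F S)"
  unfolding pr_def
proof (rule sum_mono)
  fix S assume "S \<in> Pow A"
  then show "(if P S then wt A p S else 0) \<le> wt A p S * F S"
    using assms wt_nonneg[of p A S] by (auto simp: mult_le_cancel_left1 mult_nonneg_nonneg)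
qed

lemma exp_neg_bound: "0 \<le> (l::real) \<Longrightarrow> exp (- l) \<le> 1 - l + l^2"
proof -
  assume l: "0 \<le> l"
  have "1 + l \<le> exp l" by (rule exp_ge_add_one_self)
  then have "exp (-l) \<le> 1 / (1 + l)" using l by (simp add: exp_minus field_simps)
  also have "\<dots> \<le> 1 - l + l^2"
    using l by (simp add: field_simps power2_eq_square)
  finally show ?thesis .
qed

lemma sum_wt_F:
  assumes A: "finite A" and B: "B \<subseteq> A"
  shows "(\<Sum>S\<in>Pow A. wt A p S * (K * c ^ card (S \<inter> B))) = K * (p * c + (1 - p)) ^ card B"
proof -
  have "(\<Sum>S\<in>Pow A. wt A p S * (K * c ^ card (S \<inter> B))) = K * (\<Sum>S\<in>Pow A. wt A p S * c ^ card (S \<inter> B))"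
    by (simp add: sum_distrib_left algebra_simps)
  then show ?thesis using mgf[OF A B] by simp
qed

lemma pow_exp_bound:
  assumes "0 \<le> 1 + x" shows "(1 + x) ^ k \<le> exp (real k * x)"
proof -
  have "(1 + x) ^ k \<le> exp x ^ k" using assms by (intro power_mono) (simp_all add: exp_ge_add_one_self add.commute)
  then show ?thesis by (simp add: exp_of_nat_mult)
qed

lemma chernoff:
  assumes A: "finite A" and B: "B \<subseteq> A" and p: "0 \<le> p" "p \<le> 1"
    and mu: "mu = p * real (card B)" and t: "0 < t" "t \<le> 2 * mu"
  shows "pr A p (\<lambda>S. t \<le> \<bar>real (card (S \<inter> B)) - mu\<bar>) \<le> 2 * exp (- (t^2) / (4 * mu))"
proof -
  define l where "l = t / (2 * mu)"
  have mup: "0 < mu" using t by simp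
  have l0: "0 < l" and l1: "l \<le> 1" using t mup by (auto simp: l_def)
  have key: "mu * l^2 - l * t = - (t^2) / (4 * mu)"
    using mup by (simp add: l_def field_simps power2_eq_square)
  have up: "pr A p (\<lambda>S. mu + t \<le> real (card (S \<inter> B))) \<le> exp (- (t^2) / (4 * mu))"
  proof -
    have "pr A p (\<lambda>S. mu + t \<le> real (card (S \<inter> B))) \<le>
        (\<Sum>S\<in>Pow A. wt A p S * (exp (- l * (mu + t)) * exp l ^ card (S \<inter> B)))"
    proof (rule pr_markov[OF p])
      fix S assume "mu + t \<le> real (card (S \<inter> B))"
      then have "0 \<le> l * (real (card (S \<inter> B)) - (mu + t))" using l0 by simp
      then have "1 \<le> exp (l * (real (card (S \<inter> B)) - (mu + t)))" by simp
      also have "\<dots> = exp (- l * (mu + t)) * exp l ^ card (S \<inter> B)"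
        unfolding exp_of_nat_mult[symmetric] mult_exp_exp by (simp add: algebra_simps)
      finally show "1 \<le> exp (- l * (mu + t)) * exp l ^ card (S \<inter> B)" .
    qed simp
    also have "\<dots> = exp (- l * (mu + t)) * (p * exp l + (1 - p)) ^ card B"
      by (rule sum_wt_F[OF A B])
    also have "\<dots> \<le> exp (- l * (mu + t)) * exp (real (card B) * (p * (exp l - 1)))"
    proof -
      have "0 \<le> 1 + p * (exp l - 1)" proof -
        have "0 \<le> exp l - 1" using l0 by simp
        then show ?thesis using p by simp
      qed
      from pow_exp_bound[OF this, of "card B"] show ?thesis
        by (intro mult_left_mono) (simp_all add: algebra_simps)
    qed
    also have "\<dots> \<le> exp (- l * (mu + t)) * exp (mu * (l + l^2))"
    proof -
      have "exp l - 1 \<le> l + l^2" using exp_bound[of l] l0 l1 by simp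
      then have "real (card B) * (p * (exp l - 1)) \<le> real (card B) * (p * (l + l^2))"
        using p by (intro mult_left_mono) simp_all
      then show ?thesis using mu by (simp add: algebra_simps)
    qed
    also have "\<dots> = exp (mu * l^2 - l * t)" unfolding mult_exp_exp by (simp add: algebra_simps power2_eq_square)
    finally show ?thesis using key by simp
  qed
  have lo: "pr A p (\<lambda>S. real (card (S \<inter> B)) \<le> mu - t) \<le> exp (- (t^2) / (4 * mu))"
  proof -
    have "pr A p (\<lambda>S. real (card (S \<inter> B)) \<le> mu - t) \<le>
        (\<Sum>S\<in>Pow A. wt A p S * (exp (l * (mu - t)) * exp (- l) ^ card (S \<inter> B)))"
    proof (rule pr_markov[OF p])
      fix S assume "real (card (S \<inter> B)) \<le> mu - t"
      then have "0 \<le> l * ((mu - t) - real (card (S \<inter> B)))" using l0 by simp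
      then have "1 \<le> exp (l * ((mu - t) - real (card (S \<inter> B))))" by simp
      also have "\<dots> = exp (l * (mu - t)) * exp (- l) ^ card (S \<inter> B)"
        unfolding exp_of_nat_mult[symmetric] mult_exp_exp by (simp add: algebra_simps)
      finally show "1 \<le> exp (l * (mu - t)) * exp (- l) ^ card (S \<inter> B)" .
    qed simp
    also have "\<dots> = exp (l * (mu - t)) * (p * exp (- l) + (1 - p)) ^ card B"
      by (rule sum_wt_F[OF A B])
    also have "\<dots> \<le> exp (l * (mu - t)) * exp (real (card B) * (p * (exp (- l) - 1)))"
    proof -
      have "0 \<le> 1 + p * (exp (- l) - 1)" proof -
        have "exp (- l) - 1 \<ge> -1" by (smt (verit) exp_gt_zero)
        then have "p * (exp (- l) - 1) \<ge> p * (-1)" using p by (intro mult_left_mono) auto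
        then show ?thesis using p by simp
      qed
      from pow_exp_bound[OF this, of "card B"] show ?thesis
        by (intro mult_left_mono) (simp_all add: algebra_simps)
    qed
    also have "\<dots> \<le> exp (l * (mu - t)) * exp (mu * (- l + l^2))"
    proof -
      have "exp (- l) - 1 \<le> - l + l^2" using exp_neg_bound[of l] l0 by simp
      then have "real (card B) * (p * (exp (- l) - 1)) \<le> real (card B) * (p * (- l + l^2))"
        using p by (intro mult_left_mono) simp_all
      then show ?thesis using mu by (simp add: algebra_simps)
    qed
    also have "\<dots> = exp (mu * l^2 - l * t)" unfolding mult_exp_exp by (simp add: algebra_simps power2_eq_square)
    finally show ?thesis using key by simp
  qed
  have "pr A p (\<lambda>S. t \<le> \<bar>real (card (S \<inter> B)) - mu\<bar>) \<le>
      pr A p (\<lambda>S. mu + t \<le> real (card (S \<inter> B)) \<or> real (card (S \<inter> B)) \<le> mu - t)"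
    by (rule pr_mono[OF p]) auto
  also have "\<dots> \<le> pr A p (\<lambda>S. mu + t \<le> real (card (S \<inter> B))) + pr A p (\<lambda>S. real (card (S \<inter> B)) \<le> mu - t)"
    by (rule pr_union[OF p])
  finally show ?thesis using up lo by simp
qed


lemma finite_gpairs: "finite (gpairs n)"
  unfolding gpairs_def by (rule finite_subset[of _ "{..<n} \<times> {..<n}"]) auto

lemma card_gpairs: "2 * real (card (gpairs n)) = real n * (real n - 1)"
proof (induction n)
  case 0 then show ?case by (simp add: gpairs_def)
next
  case (Suc n)
  have eq: "gpairs (Suc n) = gpairs n \<union> (\<lambda>i. (i, n)) ` {..<n}"
    unfolding gpairs_def by auto
  have dis: "gpairs n \<inter> (\<lambda>i. (i, n)) ` {..<n} = {}" unfolding gpairs_def by auto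
  have "card (gpairs (Suc n)) = card (gpairs n) + n"
    unfolding eq using dis finite_gpairs by (subst card_Un_disjoint) (auto simp: card_image inj_on_def)
  then show ?case using Suc by (simp add: algebra_simps)
qed

definition inc :: "nat \<Rightarrow> nat \<Rightarrow> (nat \<times> nat) set" where
  "inc n v = {e\<in>gpairs n. fst e = v \<or> snd e = v}"

lemma inc_sub: "inc n v \<subseteq> gpairs n" unfolding inc_def by auto

lemma card_inc: assumes "v < n" shows "card (inc n v) = n - 1"
proof -
  have eq: "inc n v = (\<lambda>i. (i, v)) ` {..<v} \<union> (\<lambda>j. (v, j)) ` {v<..<n}"
    unfolding inc_def gpairs_def using assms by auto
  have "card (inc n v) = v + (n - Suc v)"
    unfolding eq by (subst card_Un_disjoint) (auto simp: card_image inj_on_def)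
  then show ?thesis using assms by simp
qed

lemma gdeg_inc: "S \<subseteq> gpairs n \<Longrightarrow> gdeg S v = card (S \<inter> inc n v)"
  unfolding gdeg_def inc_def by (rule arg_cong[where f=card]) auto

lemma gnp_pr: "gnp_prob n p P = pr (gpairs n) p P"
  unfolding gnp_prob_def pr_def wt_def by simp

lemma pr_count:
  assumes A: "finite A" and p: "0 \<le> p" "p \<le> 1" and T: "0 < T" and V: "finite V"
  shows "pr A p (\<lambda>S. T < real (card {v\<in>V. Q v S})) \<le> (\<Sum>v\<in>V. pr A p (Q v)) / T"
proof -
  have "pr A p (\<lambda>S. T < real (card {v\<in>V. Q v S})) \<le> (\<Sum>S\<in>Pow A. wt A p S * (real (card {v\<in>V. Q v S}) / T))"
    by (rule pr_markov[OF p]) (use T in auto)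
  also have "\<dots> = (\<Sum>S\<in>Pow A. \<Sum>v\<in>V. (if Q v S then wt A p S else 0)) / T"
  proof -
    have "real (card {v\<in>V. Q v S}) = (\<Sum>v\<in>V. if Q v S then 1 else 0)" for S
      using V by (simp add: sum.If_cases Int_def)
    then show ?thesis unfolding sum_divide_distrib sum_distrib_left
      by (intro sum.cong refl) (simp add: sum_distrib_left sum_divide_distrib, intro sum.cong refl, simp)
  qed
  also have "\<dots> = (\<Sum>v\<in>V. pr A p (Q v)) / T"
    unfolding pr_def by (subst sum.swap) simp
  finally show ?thesis .
qed


lemma vertex:
  assumes n2: "2 \<le> n" and p: "0 < p" "p \<le> 1" and v: "v < n"
    and y: "y = (p * real n) powr (1/3)" and y1000: "1000 \<le> y"
    and x: "x = (p * real n) powr (2/3)"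
  shows "pr (gpairs n) p (\<lambda>S. real (gdeg S v) < avg_deg n S - x \<or> real (gdeg S v) > avg_deg n S + x)
         \<le> 4 * exp (- y / 72)"
proof -
  define q where "q = p * real n"
  have q0: "0 < q" using p n2 by (simp add: q_def)
  have y3: "y ^ 3 = q"
  proof -
    have "y ^ 3 = y powr 3" using q0 y by (simp add: q_def powr_numeral)
    also have "\<dots> = q" using y q0 by (simp add: q_def powr_powr)
    finally show ?thesis .
  qed
  have x2: "x = y ^ 2"
  proof -
    have "y ^ 2 = y powr 2" using q0 y by (simp add: q_def powr_numeral)
    also have "\<dots> = x" using y x q0 by (simp add: q_def powr_powr)
    finally show ?thesis by simp
  qed
  have y0: "1 \<le> y" using y1000 by simp
  have n1: "real n - 1 \<ge> 1" using n2 by simp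
  have nhalf: "real n - 1 \<ge> real n / 2" using n2 by simp
  define B where "B = inc n v"
  define mud where "mud = p * real (card B)"
  have mud: "mud = p * (real n - 1)" using card_inc[OF v] n2 by (simp add: mud_def B_def of_nat_diff)
  define mum where "mum = p * real (card (gpairs n))"
  have mum: "2 * mum = (real n - 1) * q"
  proof -
    have "2 * mum = p * (2 * real (card (gpairs n)))" by (simp add: mum_def)
    also have "\<dots> = p * (real n * (real n - 1))" by (simp only: card_gpairs)
    finally show ?thesis by (simp add: q_def algebra_simps)
  qed
  define td where "td = x / 3"
  define tm where "tm = (real n - 1) * x / 6"
  have mud_q: "mud \<le> q" using mud p by (simp add: q_def algebra_simps)
  have mud_l: "mud \<ge> q / 2"
  proof -
    have "p * (real n / 2) \<le> p * (real n - 1)" using nhalf p by (intro mult_left_mono) auto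
    then show ?thesis using mud by (simp add: q_def)
  qed
  have yy: "y^2 \<le> y^3" using y0 by (simp add: power_increasing)
  have td0: "0 < td" using x2 y0 by (simp add: td_def)
  have tm0: "0 < tm" using x2 y0 n1 by (simp add: tm_def)
  have td2: "td \<le> 2 * mud" using mud_l y3 x2 yy q0 by (simp add: td_def)
  have tm2: "tm \<le> 2 * mum"
  proof -
    have "(real n - 1) * y^2 \<le> (real n - 1) * y^3" using yy n1 by (intro mult_left_mono) auto
    then show ?thesis using mum y3 x2 n1 q0 by (simp add: tm_def)
  qed
  have E1: "pr (gpairs n) p (\<lambda>S. td \<le> \<bar>real (card (S \<inter> B)) - mud\<bar>) \<le> 2 * exp (- (td^2) / (4 * mud))"
    by (rule chernoff[OF finite_gpairs _ _ _ mud_def td0 td2]) (use p in \<open>auto simp: B_def inc_sub\<close>)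
  have E2: "pr (gpairs n) p (\<lambda>S. tm \<le> \<bar>real (card (S \<inter> gpairs n)) - mum\<bar>) \<le> 2 * exp (- (tm^2) / (4 * mum))"
    by (rule chernoff[OF finite_gpairs _ _ _ mum_def tm0 tm2]) (use p in auto)
  have mud0: "0 < mud" using mud_l q0 by simp
  have b1: "exp (- (td^2) / (4 * mud)) \<le> exp (- y / 72)"
  proof -
    have "td^2 / (4 * mud) \<ge> td^2 / (4 * q)" using mud_q mud0 td0
      by (intro divide_left_mono) auto
    moreover have "td^2 / (4 * q) = y / 36"
    proof -
      have "td^2 = y * y^3 / 9" unfolding td_def x2 by (simp add: power2_eq_square power3_eq_cube)
      then show ?thesis using y3 q0 by (simp add: field_simps)
    qed
    ultimately show ?thesis using y0 by simp
  qed
  have b2: "exp (- (tm^2) / (4 * mum)) \<le> exp (- y / 72)"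
  proof -
    have "tm^2 / (4 * mum) = (real n - 1) * y / 72"
    proof -
      have h4: "4 * mum = 2 * (real n - 1) * y^3" using mum y3 by (simp add: algebra_simps)
      have ht: "tm^2 = (real n - 1) * (real n - 1) * (y * y^3) / 36"
        unfolding tm_def x2 by (simp add: power2_eq_square power3_eq_cube)
      have Y: "0 < y^3" using y0 by simp
      have g: "\<And>a Y. 0 < a \<Longrightarrow> 0 < Y \<Longrightarrow> a * a * (y * Y) / 36 / (2 * a * Y) = a * y / 72"
        by (simp add: field_simps)
      have "tm^2 / (4 * mum) = (real n - 1) * (real n - 1) * (y * y^3) / 36 / (2 * (real n - 1) * y^3)"
        by (simp only: h4 ht)
      also have "\<dots> = (real n - 1) * y / 72" using n1 Y by (intro g) auto
      finally show ?thesis .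
    qed
    moreover have "(real n - 1) * y / 72 \<ge> y / 72" using n1 y0 by (simp add: mult_le_cancel_right1)
    ultimately show ?thesis by simp
  qed
  have incl: "pr (gpairs n) p (\<lambda>S. real (gdeg S v) < avg_deg n S - x \<or> real (gdeg S v) > avg_deg n S + x)
      \<le> pr (gpairs n) p (\<lambda>S. td \<le> \<bar>real (card (S \<inter> B)) - mud\<bar> \<or> tm \<le> \<bar>real (card (S \<inter> gpairs n)) - mum\<bar>)"
  proof (rule pr_mono)
    fix S assume S: "S \<subseteq> gpairs n"
      and at: "real (gdeg S v) < avg_deg n S - x \<or> real (gdeg S v) > avg_deg n S + x"
    show "td \<le> \<bar>real (card (S \<inter> B)) - mud\<bar> \<or> tm \<le> \<bar>real (card (S \<inter> gpairs n)) - mum\<bar>"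
    proof (rule ccontr)
      assume "\<not> ?thesis"
      then have h1: "\<bar>real (gdeg S v) - mud\<bar> < x / 3" and h2: "\<bar>real (card S) - mum\<bar> < (real n - 1) * x / 6"
        using S gdeg_inc[OF S, of v] by (auto simp: td_def tm_def B_def Int_absorb2)
      have av: "avg_deg n S - p * real n = 2 * (real (card S) - mum) / (real n - 1)"
        using mum n1 unfolding avg_deg_def q_def by (simp add: field_simps)
      have "\<bar>2 * (real (card S) - mum) / (real n - 1)\<bar> = 2 * \<bar>real (card S) - mum\<bar> / (real n - 1)"
        using n1 by (simp only: abs_divide abs_mult)
      also have "\<dots> < x / 3"
        using h2 n1 by (subst pos_divide_less_eq) (auto simp: algebra_simps)
      finally have "\<bar>2 * (real (card S) - mum) / (real n - 1)\<bar> < x / 3" .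
      then have h3: "\<bar>avg_deg n S - p * real n\<bar> < x / 3" using av by simp
      have "y \<le> y * y" using y0 by simp
      then have "p \<le> x / 3" using p x2 y1000 unfolding power2_eq_square by linarith
      moreover have "mud = p * real n - p" using mud by (simp add: algebra_simps)
      ultimately have F: "\<not> real (gdeg S v) < avg_deg n S - x" "\<not> avg_deg n S + x < real (gdeg S v)"
        using h1 h3 p unfolding abs_less_iff by linarith+
      show False using at F by blast
    qed
  qed (use p in auto)
  also have "\<dots> \<le> pr (gpairs n) p (\<lambda>S. td \<le> \<bar>real (card (S \<inter> B)) - mud\<bar>) + pr (gpairs n) p (\<lambda>S. tm \<le> \<bar>real (card (S \<inter> gpairs n)) - mum\<bar>)"
    by (rule pr_union) (use p in auto)
  finally show ?thesis using E1 E2 b1 b2 by linarith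
qed


theorem lemma4p3:
  fixes f :: "nat \<Rightarrow> real"
  assumes "\<And>n. f n \<ge> 0"
    and "filterlim f at_top sequentially"
  shows "\<exists>C>0. \<forall>\<^sub>F n in sequentially. \<forall>p::real. f n / real n \<le> p \<and> p \<le> 1 \<longrightarrow>
           gnp_prob n p (\<lambda>S. real (num_atypical n ((p * real n) powr (2/3)) S)
                               \<le> real n / exp (C * f n powr (1/3)))
             \<ge> 1 - exp (- C * (p * real n) powr (1/3))"
proof (intro exI[of _ "1/288"] conjI)
  show "(0::real) < 1/288" by simp
  have ev1: "\<forall>\<^sub>F n in sequentially. 1000000000 \<le> f n"
    using assms(2) by (simp add: filterlim_at_top)
  have ev2: "\<forall>\<^sub>F n in sequentially. 2 \<le> n" by (rule eventually_ge_at_top)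
  show "\<forall>\<^sub>F n in sequentially. \<forall>p::real. f n / real n \<le> p \<and> p \<le> 1 \<longrightarrow>
           gnp_prob n p (\<lambda>S. real (num_atypical n ((p * real n) powr (2/3)) S)
                               \<le> real n / exp (1/288 * f n powr (1/3)))
             \<ge> 1 - exp (- (1/288) * (p * real n) powr (1/3))"
    using ev1 ev2
  proof eventually_elim
    case (elim n)
    show ?case
    proof (intro allI impI, elim conjE)
      fix p :: real assume pl: "f n / real n \<le> p" and p1: "p \<le> 1"
      define q where "q = p * real n"
      define y where "y = q powr (1/3)"
      define x where "x = q powr (2/3)"
      define T where "T = real n / exp (1/288 * f n powr (1/3))"
      have n0: "0 < real n" using elim by simp
      have fq: "f n \<le> q" using pl n0 by (simp add: q_def field_simps)
      have q9: "1000000000 \<le> q" using fq elim by simp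
      have p0: "0 < p"
      proof (rule ccontr)
        assume "\<not> 0 < p" then have "q \<le> 0" using n0 by (simp add: q_def mult_nonpos_nonneg)
        then show False using q9 by simp
      qed
      have y3: "y ^ 3 = q"
      proof -
        have "y ^ 3 = y powr 3" using q9 by (simp add: y_def powr_numeral)
        also have "\<dots> = q" using q9 by (simp add: y_def powr_powr)
        finally show ?thesis .
      qed
      have y0: "0 \<le> y" by (simp add: y_def)
      have y1000: "1000 \<le> y"
      proof -
        have "(1000::real) ^ 3 \<le> y ^ 3" using y3 q9 by simp
        show ?thesis
        proof (rule ccontr)
          assume "\<not> 1000 \<le> y"
          then have "y ^ 3 < (1000::real) ^ 3" using y0 by (intro power_strict_mono) auto
          then show False using \<open>(1000::real) ^ 3 \<le> y ^ 3\<close> by simp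
        qed
      qed
      have fy: "f n powr (1/3) \<le> y" unfolding y_def
        using fq assms(1)[of n] by (intro powr_mono2) auto
      have T0: "0 < T" using n0 by (simp add: T_def)
      define Q where "Q v S = (real (gdeg S v) < avg_deg n S - x \<or> real (gdeg S v) > avg_deg n S + x)" for v S
      have num: "num_atypical n x S = card {v\<in>{..<n}. Q v S}" for S
        unfolding num_atypical_def Q_def by (rule arg_cong[where f=card]) auto
      have "pr (gpairs n) p (\<lambda>S. T < real (num_atypical n x S)) \<le> (\<Sum>v\<in>{..<n}. pr (gpairs n) p (Q v)) / T"
        unfolding num by (rule pr_count[OF finite_gpairs _ p1 T0]) (use p0 in auto)
      also have "\<dots> \<le> (\<Sum>v\<in>{..<n}. 4 * exp (- y / 72)) / T"
      proof (intro divide_right_mono sum_mono)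
        fix v assume "v \<in> {..<n}"
        then show "pr (gpairs n) p (Q v) \<le> 4 * exp (- y / 72)" unfolding Q_def
          by (intro vertex) (use elim p0 p1 y1000 in \<open>auto simp: q_def y_def x_def\<close>)
      qed (use T0 in auto)
      also have "\<dots> = 4 * exp (- y / 72) * exp (1/288 * f n powr (1/3))"
        using n0 by (simp add: T_def)
      also have "\<dots> \<le> 4 * exp (- y / 72) * exp (1/288 * y)"
        using fy by (intro mult_left_mono) auto
      also have "\<dots> = 4 * exp (- (y / 96))"
        unfolding mult.assoc mult_exp_exp by simp
      also have "\<dots> \<le> exp (- (1/288) * y)"
      proof -
        have "4 \<le> exp (y / 144)"
        proof -
          have "1 + y / 144 \<le> exp (y / 144)" by (rule exp_ge_add_one_self)
          then show ?thesis using y1000 by linarith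
        qed
        then have "4 * exp (- (y / 96)) \<le> exp (y / 144) * exp (- (y / 96))" by simp
        also have "\<dots> = exp (- (1/288) * y)" unfolding mult_exp_exp by simp
        finally show ?thesis .
      qed
      finally have bound: "pr (gpairs n) p (\<lambda>S. T < real (num_atypical n x S)) \<le> exp (- (1/288) * y)" .
      have "gnp_prob n p (\<lambda>S. real (num_atypical n x S) \<le> T) = pr (gpairs n) p (\<lambda>S. \<not> T < real (num_atypical n x S))"
        by (simp add: gnp_pr not_less)
      also have "\<dots> = 1 - pr (gpairs n) p (\<lambda>S. T < real (num_atypical n x S))"
        by (rule pr_compl[OF finite_gpairs])
      finally have "gnp_prob n p (\<lambda>S. real (num_atypical n x S) \<le> T) \<ge> 1 - exp (- (1/288) * y)"
        using bound by simp
      then show "gnp_prob n p (\<lambda>S. real (num_atypical n ((p * real n) powr (2/3)) S)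
                               \<le> real n / exp (1/288 * f n powr (1/3)))
             \<ge> 1 - exp (- (1/288) * (p * real n) powr (1/3))"
        by (simp add: x_def y_def q_def T_def)
    qed
  qed
qed

end
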